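(* Let $\Gamma$ be a group, $\alpha\in\mathrm{Aut}(\Gamma)$ and $\omega:\Gamma\times\Gamma\to\Gamma$, $\omega(g,h)=\alpha(g)$. The map $\kappa:\prod_{\mathbb Q_2}\Gamma\to K(\omega)$ sending $f:\mathbb Q_2\to\Gamma$ to the map $\{0,1\}^*\to\Gamma$, $u\mapsto\alpha^{-|u|}(f(u00\cdots))$, is a well-defined isomorphism of groups.
   Context: $\{0,1\}^*$ denotes the finite words over $\{0,1\}$ (including the empty word), $|u|$ the length of $u$; $\mathbb Q_2\subset\{0,1\}^{\mathbb N}$ is the set of eventually-zero sequences, each of the form $u00\cdots$ with $u\in\{0,1\}^*$. $\prod_{\mathbb Q_2}\Gamma$ is the group of all maps $\mathbb Q_2\to\Gamma$ under pointwise product. $K(\omega)$ is the group (pointwise product) of maps $a:\{0,1\}^*\to\Gamma$ with $a(u)=\omega(a(u0),a(u1))$ for all $u$. *)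

theory Defs
  imports "HOL-Algebra.Algebra"
begin

text \<open>Binary digits: False = 0, True = 1. Finite words are bool lists.
  Q2 = eventually-zero sequences in {0,1}^N.\<close>

definition Q2 :: "(nat \<Rightarrow> bool) set" where
  "Q2 = {s. \<exists>N. \<forall>n\<ge>N. \<not> s n}"

definition pad0 :: "bool list \<Rightarrow> (nat \<Rightarrow> bool)" where
  "pad0 u = (\<lambda>n. if n < length u then u ! n else False)"

definition K_group :: "('g, 'z) monoid_scheme \<Rightarrow> ('g \<Rightarrow> 'g \<Rightarrow> 'g) \<Rightarrow> (bool list \<Rightarrow> 'g) monoid" where
  "K_group G \<omega> = \<lparr>carrier = {a. (\<forall>u. a u \<in> carrier G) \<and>
                        (\<forall>u. a u = \<omega> (a (u @ [False])) (a (u @ [True])))},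
                 monoid.mult = (\<lambda>a b u. a u \<otimes>\<^bsub>G\<^esub> b u),
                 one = (\<lambda>u. \<one>\<^bsub>G\<^esub>)\<rparr>"

end

theory Submission
  imports Defs
begin

lemma pad0_surj:
  assumes "s \<in> Q2" shows "\<exists>u. pad0 u = s"
proof -
  from assms obtain N where N: "\<forall>n\<ge>N. \<not> s n" by (auto simp: Q2_def)
  have "pad0 (map s [0..<N]) = s"
    unfolding pad0_def using N by (auto intro!: ext simp: not_less)
  then show ?thesis by blast
qed

lemma pad0_in: "pad0 u \<in> Q2"
  unfolding Q2_def pad0_def mem_Collect_eq by (rule exI[of _ "length u"]) auto

lemma pad0_eq_app:
  assumes "pad0 u = pad0 v" "length u \<le> length v"
  shows "v = u @ replicate (length v - length u) False"
proof (rule nth_equalityI)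
  show "length v = length (u @ replicate (length v - length u) False)" using assms by simp
next
  fix i assume i: "i < length v"
  have "pad0 u i = pad0 v i" using assms by simp
  then show "v ! i = (u @ replicate (length v - length u) False) ! i"
    using i by (auto simp: pad0_def nth_append split: if_splits)
qed

theorem mainTheorem6:
  fixes G :: "('g, 'z) monoid_scheme" and \<alpha> :: "'g \<Rightarrow> 'g"
  assumes "group G"
    and "\<alpha> \<in> iso G G"
  shows "(\<lambda>f. \<lambda>u. (inv_into (carrier G) \<alpha> ^^ length u) (f (pad0 u)))
           \<in> iso (product_group Q2 (\<lambda>_. G)) (K_group G (\<lambda>g h. \<alpha> g))"
proof -
  interpret group G by fact
  define \<beta> where "\<beta> = inv_into (carrier G) \<alpha>"
  have ahom: "\<alpha> \<in> hom G G" and abij: "bij_betw \<alpha> (carrier G) (carrier G)"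
    using assms(2) by (auto simp: iso_def)
  have bc: "\<beta> x \<in> carrier G" if "x \<in> carrier G" for x
    using abij that unfolding \<beta>_def by (metis bij_betw_imp_surj_on inv_into_into)
  have ac: "\<alpha> x \<in> carrier G" if "x \<in> carrier G" for x
    using abij that by (meson bij_betwE)
  have ab: "\<alpha> (\<beta> x) = x" if "x \<in> carrier G" for x
    using abij that unfolding \<beta>_def by (meson bij_betw_inv_into_right)
  have ba: "\<beta> (\<alpha> x) = x" if "x \<in> carrier G" for x
    using abij that unfolding \<beta>_def by (meson bij_betw_inv_into_left)
  have amul: "\<alpha> (x \<otimes>\<^bsub>G\<^esub> y) = \<alpha> x \<otimes>\<^bsub>G\<^esub> \<alpha> y" if "x \<in> carrier G" "y \<in> carrier G" for x y
    using ahom that by (simp add: hom_mult)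
  have bmul: "\<beta> (x \<otimes>\<^bsub>G\<^esub> y) = \<beta> x \<otimes>\<^bsub>G\<^esub> \<beta> y" if "x \<in> carrier G" "y \<in> carrier G" for x y
  proof -
    have "\<alpha> (\<beta> x \<otimes>\<^bsub>G\<^esub> \<beta> y) = x \<otimes>\<^bsub>G\<^esub> y" using that by (simp add: amul bc ab)
    then have "\<beta> (x \<otimes>\<^bsub>G\<^esub> y) = \<beta> (\<alpha> (\<beta> x \<otimes>\<^bsub>G\<^esub> \<beta> y))" by simp
    also have "\<dots> = \<beta> x \<otimes>\<^bsub>G\<^esub> \<beta> y" using that by (simp add: ba bc)
    finally show ?thesis .
  qed
  have bnc: "(\<beta>^^n) x \<in> carrier G" if "x \<in> carrier G" for n x
    using that by (induction n) (auto simp: bc)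
  have anc: "(\<alpha>^^n) x \<in> carrier G" if "x \<in> carrier G" for n x
    using that by (induction n) (auto simp: ac)
  have bnmul: "(\<beta>^^n) (x \<otimes>\<^bsub>G\<^esub> y) = (\<beta>^^n) x \<otimes>\<^bsub>G\<^esub> (\<beta>^^n) y" if "x \<in> carrier G" "y \<in> carrier G" for n x y
    using that by (induction n) (auto simp: bmul bnc)
  have bna: "(\<beta>^^n) ((\<alpha>^^n) x) = x" if "x \<in> carrier G" for n x
    using that
  proof (induction n arbitrary: x)
    case (Suc n)
    have "(\<beta>^^Suc n) ((\<alpha>^^Suc n) x) = (\<beta>^^n) (\<beta> (\<alpha> ((\<alpha>^^n) x)))"
      by (metis funpow_Suc_right funpow.simps(2) comp_apply)
    then show ?case using Suc by (simp add: ba anc)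
  qed simp
  have anb: "(\<alpha>^^n) ((\<beta>^^n) x) = x" if "x \<in> carrier G" for n x
    using that
  proof (induction n arbitrary: x)
    case (Suc n)
    have "(\<alpha>^^Suc n) ((\<beta>^^Suc n) x) = (\<alpha>^^n) (\<alpha> (\<beta> ((\<beta>^^n) x)))"
      by (metis funpow_Suc_right funpow.simps(2) comp_apply)
    then show ?case using Suc by (simp add: ab bnc)
  qed simp
  define \<kappa> where "\<kappa> = (\<lambda>f. \<lambda>u. (\<beta> ^^ length u) (f (pad0 u)))"
  have padF: "pad0 (u @ [False]) = pad0 u" for u
    by (auto simp: pad0_def nth_append intro!: ext)
  have Kc: "carrier (K_group G (\<lambda>g h. \<alpha> g)) = {a. (\<forall>u. a u \<in> carrier G) \<and> (\<forall>u. a u = \<alpha> (a (u @ [False])))}"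
    by (simp add: K_group_def)
  have Km: "a \<otimes>\<^bsub>K_group G (\<lambda>g h. \<alpha> g)\<^esub> b = (\<lambda>u. a u \<otimes>\<^bsub>G\<^esub> b u)" for a b
    by (simp add: K_group_def)
  have into: "\<kappa> f \<in> carrier (K_group G (\<lambda>g h. \<alpha> g))" if f: "f \<in> (\<Pi>\<^sub>E i\<in>Q2. carrier G)" for f
  proof -
    have fc: "f (pad0 u) \<in> carrier G" for u using f pad0_in by blast
    have "\<kappa> f u = \<alpha> (\<kappa> f (u @ [False]))" for u
      unfolding \<kappa>_def padF by (simp only: length_append_singleton funpow.simps(2) o_apply) (simp add: ab bnc fc)
    moreover have "\<kappa> f u \<in> carrier G" for u unfolding \<kappa>_def using fc bnc by blast
    ultimately show ?thesis unfolding Kc mem_Collect_eq by blast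
  qed
  have hom: "\<kappa> \<in> hom (product_group Q2 (\<lambda>_. G)) (K_group G (\<lambda>g h. \<alpha> g))"
  proof (rule homI)
    fix f assume "f \<in> carrier (product_group Q2 (\<lambda>_. G))"
    then show "\<kappa> f \<in> carrier (K_group G (\<lambda>g h. \<alpha> g))" using into by simp
  next
    fix f g assume f: "f \<in> carrier (product_group Q2 (\<lambda>_. G))" and g: "g \<in> carrier (product_group Q2 (\<lambda>_. G))"
    have fc: "f (pad0 u) \<in> carrier G" "g (pad0 u) \<in> carrier G" for u using f g pad0_in by auto
    show "\<kappa> (f \<otimes>\<^bsub>product_group Q2 (\<lambda>_. G)\<^esub> g) = \<kappa> f \<otimes>\<^bsub>K_group G (\<lambda>g h. \<alpha> g)\<^esub> \<kappa> g"
      unfolding Km \<kappa>_def using fc pad0_in by (auto intro!: ext simp: bnmul)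
  qed
  have inj: "inj_on \<kappa> (carrier (product_group Q2 (\<lambda>_. G)))"
  proof (rule inj_onI)
    fix f g assume f: "f \<in> carrier (product_group Q2 (\<lambda>_. G))" and g: "g \<in> carrier (product_group Q2 (\<lambda>_. G))"
      and eq: "\<kappa> f = \<kappa> g"
    show "f = g"
    proof
      fix s show "f s = g s"
      proof (cases "s \<in> Q2")
        case True
        then obtain u where u: "pad0 u = s" using pad0_surj by blast
        have e: "(\<beta>^^length u) (f s) = (\<beta>^^length u) (g s)" using fun_cong[OF eq, of u] u by (simp add: \<kappa>_def)
        have f': "f \<in> Q2 \<rightarrow>\<^sub>E carrier G" using f by (simp only: carrier_product_group)
        have g': "g \<in> Q2 \<rightarrow>\<^sub>E carrier G" using g by (simp only: carrier_product_group)
        have fs: "f s \<in> carrier G" by (rule PiE_mem[OF f' True])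
        have gs: "g s \<in> carrier G" by (rule PiE_mem[OF g' True])
        from e have "(\<alpha>^^length u) ((\<beta>^^length u) (f s)) = (\<alpha>^^length u) ((\<beta>^^length u) (g s))"
          by (rule arg_cong)
        then show ?thesis by (simp only: anb[OF fs] anb[OF gs])
      next
        case False
        have f': "f \<in> Q2 \<rightarrow>\<^sub>E carrier G" using f by (simp only: carrier_product_group)
        have g': "g \<in> Q2 \<rightarrow>\<^sub>E carrier G" using g by (simp only: carrier_product_group)
        show ?thesis using PiE_arb[OF f' False] PiE_arb[OF g' False] by (rule trans[OF _ sym])
      qed
    qed
  qed
  have surj: "carrier (K_group G (\<lambda>g h. \<alpha> g)) \<subseteq> \<kappa> ` carrier (product_group Q2 (\<lambda>_. G))"
  proof
    fix a assume "a \<in> carrier (K_group G (\<lambda>g h. \<alpha> g))"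
    then have aa: "(\<forall>u. a u \<in> carrier G) \<and> (\<forall>u. a u = \<alpha> (a (u @ [False])))"
      unfolding Kc mem_Collect_eq .
    have ac': "a u \<in> carrier G" for u using spec[OF conjunct1[OF aa], of u] .
    have rec: "a u = \<alpha> (a (u @ [False]))" for u using spec[OF conjunct2[OF aa], of u] .
    define c where "c u = (\<alpha>^^length u) (a u)" for u
    have crep: "c (u @ replicate k False) = c u" for u k
    proof (induction k)
      case (Suc k)
      have "u @ replicate (Suc k) False = (u @ replicate k False) @ [False]"
        by (metis append_assoc replicate_Suc replicate_append_same)
      then have "c (u @ replicate (Suc k) False) = (\<alpha>^^length (u @ replicate k False)) (\<alpha> (a ((u @ replicate k False) @ [False])))"
        unfolding c_def by (simp only: length_append_singleton funpow_Suc_right o_apply)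
      also have "\<dots> = c (u @ replicate k False)" unfolding c_def by (simp only: rec[symmetric])
      finally show ?case using Suc by simp
    qed simp
    have ceq: "c u = c v" if "pad0 u = pad0 v" for u v
    proof (cases "length u \<le> length v")
      case True
      have ve: "v = u @ replicate (length v - length u) False" by (rule pad0_eq_app[OF that True])
      have "c v = c (u @ replicate (length v - length u) False)" using ve by (rule arg_cong)
      also have "\<dots> = c u" by (rule crep)
      finally show ?thesis by (rule sym)
    next
      case False
      then have le: "length v \<le> length u" by simp
      have ue: "u = v @ replicate (length u - length v) False" by (rule pad0_eq_app[OF that[symmetric] le])
      have "c u = c (v @ replicate (length u - length v) False)" using ue by (rule arg_cong)
      also have "\<dots> = c v" by (rule crep)
      finally show ?thesis .
    qed
    define f where "f = (\<lambda>s\<in>Q2. c (SOME u. pad0 u = s))"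
    have cc: "c u \<in> carrier G" for u unfolding c_def by (rule anc[OF ac'])
    have "f \<in> Q2 \<rightarrow>\<^sub>E carrier G" unfolding f_def restrict_PiE_iff using cc by blast
    then have fin: "f \<in> carrier (product_group Q2 (\<lambda>_. G))" by (simp only: carrier_product_group)
    have "\<kappa> f = a"
    proof
      fix u
      have "pad0 (SOME v. pad0 v = pad0 u) = pad0 u" by (rule someI) simp
      then have "c (SOME v. pad0 v = pad0 u) = c u" by (rule ceq)
      then have "f (pad0 u) = c u" using pad0_in by (simp add: f_def)
      then have "\<kappa> f u = (\<beta>^^length u) ((\<alpha>^^length u) (a u))" by (simp only: \<kappa>_def c_def)
      also have "\<dots> = a u" by (rule bna[OF ac'])
      finally show "\<kappa> f u = a u" .
    qed
    then show "a \<in> \<kappa> ` carrier (product_group Q2 (\<lambda>_. G))" using fin by blast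
  qed
  have "bij_betw \<kappa> (carrier (product_group Q2 (\<lambda>_. G))) (carrier (K_group G (\<lambda>g h. \<alpha> g)))"
  proof -
    have "\<kappa> ` carrier (product_group Q2 (\<lambda>_. G)) \<subseteq> carrier (K_group G (\<lambda>g h. \<alpha> g))"
      using into by auto
    then show ?thesis unfolding bij_betw_def using inj surj by blast
  qed
  then have "\<kappa> \<in> iso (product_group Q2 (\<lambda>_. G)) (K_group G (\<lambda>g h. \<alpha> g))"
    using hom by (rule isoI[rotated])
  then show ?thesis by (simp only: \<kappa>_def \<beta>_def)
qed

end
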